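(* Let $a,r$ be positive integers and let $h:\mathbb Z\to\mathbb Z_{\ge0}$ be given by $h(j)=a r^j$ for $j\ge 0$ and $h(j)=0$ for $j<0$. Then $\operatorname{hdepth}(h)=r$.
   Context: For a nonzero function $h:\mathbb Z\to\mathbb Z_{\ge 0}$ with $h(j)=0$ for all sufficiently negative $j$, and integers $k\le d$, set $\beta_k^d(h)=\sum_{j\le k}(-1)^{k-j}\binom{d-j}{k-j}h(j)$, and $\operatorname{hdepth}(h)=\max\{d\in\mathbb Z:\ \beta_k^d(h)\ge 0\text{ for all integers }k\le d\}$. *)

theory Defs
  imports Main
begin

text \<open>beta_k^d(h) = sum over j <= k of (-1)^(k-j) * binom(d-j, k-j) * h(j), for k <= d.
  Only j with h j \<noteq> 0 contribute; this set is finite when h vanishes for sufficiently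
  negative j.\<close>
definition beta :: "(int \<Rightarrow> int) \<Rightarrow> int \<Rightarrow> int \<Rightarrow> int" where
  "beta h d k = (\<Sum>j\<in>{j. j \<le> k \<and> h j \<noteq> 0}.
      (-1) ^ nat (k - j) * int (nat (d - j) choose nat (k - j)) * h j)"

definition hdepth :: "(int \<Rightarrow> int) \<Rightarrow> int" where
  "hdepth h = (GREATEST d. \<forall>k. k \<le> d \<longrightarrow> beta h d k \<ge> 0)"

end

theory Submission
  imports Defs
begin

lemma alt_sum:
  fixes T :: "nat \<Rightarrow> int"
  assumes "\<forall>i<k. T (Suc i) \<le> T i" "\<forall>i\<le>k. 0 \<le> T i"
  shows "0 \<le> (\<Sum>i\<le>k. (-1)^i * T i) \<and> (\<Sum>i\<le>k. (-1)^i * T i) \<le> T 0"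
  using assms
proof (induction k arbitrary: T)
  case 0
  then show ?case by simp
next
  case (Suc k)
  have IH: "0 \<le> (\<Sum>i\<le>k. (-1)^i * T (Suc i)) \<and> (\<Sum>i\<le>k. (-1)^i * T (Suc i)) \<le> T 1"
    using Suc.IH[of "\<lambda>i. T (Suc i)"] Suc.prems by auto
  have eq: "(\<Sum>i\<le>Suc k. (-1)^i * T i) = T 0 - (\<Sum>i\<le>k. (-1)^i * T (Suc i))"
    by (subst sum.atMost_Suc_shift) (simp add: sum_negf)
  have "T 1 \<le> T 0" using Suc.prems by auto
  moreover have "0 \<le> T 1" using Suc.prems by auto
  ultimately show ?case using IH eq by linarith
qed

lemma mono_step:
  fixes r K m :: nat
  assumes "K \<le> r" "m < K"
  shows "((r - K + Suc m) choose Suc m) * r ^ (K - Suc m) \<le> ((r - K + m) choose m) * r ^ (K - m)"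
proof -
  define N where "N = r - K + m"
  have N1: "r - K + Suc m = Suc N" using N_def by simp
  have e: "Suc N * (N choose m) = (Suc N choose Suc m) * Suc m" by (rule Suc_times_binomial_eq)
  have "Suc N \<le> r * Suc m" using assms N_def by (simp add: algebra_simps) 
  hence "(Suc N choose Suc m) * Suc m \<le> (r * (N choose m)) * Suc m"
    using e by (metis mult.commute mult.left_commute mult_le_mono1)
  hence c: "(Suc N choose Suc m) \<le> r * (N choose m)" using mult_le_cancel2 by blast
  have km: "K - m = Suc (K - Suc m)" using assms by simp
  have p: "r ^ (K - m) = r * r ^ (K - Suc m)" unfolding km by simp
  have "(Suc N choose Suc m) * r ^ (K - Suc m) \<le> r * (N choose m) * r ^ (K - Suc m)"
    using c by (rule mult_le_mono1)
  also have "\<dots> = (N choose m) * r ^ (K - m)" using p by simp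
  finally show ?thesis using N1 N_def by simp
qed

theorem corollary1p9:
  fixes a r :: nat
  assumes "a > 0" and "r > 0"
  shows "hdepth (\<lambda>j::int. if j \<ge> 0 then int a * int r ^ nat j else 0) = int r"
proof -
  define h where "h = (\<lambda>j::int. if j \<ge> 0 then int a * int r ^ nat j else 0)"
  have hnz: "h j \<noteq> 0 \<longleftrightarrow> j \<ge> 0" for j using assms by (simp add: h_def)
  have set_eq: "{j. j \<le> k \<and> h j \<noteq> 0} = {0..k}" for k by (auto simp: hnz)
  have beta_eq: "beta h d k = (\<Sum>j\<in>{0..k}. (-1) ^ nat (k - j) * int (nat (d - j) choose nat (k - j)) * h j)"
    for d k unfolding beta_def set_eq ..
  have Pr: "\<forall>k. k \<le> int r \<longrightarrow> beta h (int r) k \<ge> 0"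
  proof (intro allI impI)
    fix k assume kr: "k \<le> int r"
    show "beta h (int r) k \<ge> 0"
    proof (cases "k < 0")
      case True then show ?thesis by (simp add: beta_eq)
    next
      case False
      then obtain K where kK: "k = int K" by (metis nonneg_eq_int not_less)
      have Kr: "K \<le> r" using kr kK by simp
      have nd: "nat (int u - int x) = u - x" for u x :: nat by linarith
      have "beta h (int r) k = (\<Sum>j\<in>int ` {0..K}. (-1) ^ nat (int K - j) * int (nat (int r - j) choose nat (int K - j)) * h j)"
        using kK by (simp add: beta_eq image_int_atLeastAtMost)
      also have "\<dots> = (\<Sum>j\<in>{0..K}. (-1) ^ (K - j) * int ((r - j) choose (K - j)) * (int a * int r ^ j))"
        by (subst sum.reindex) (auto simp: inj_on_def h_def nd intro!: sum.cong)
      also have "\<dots> = (\<Sum>m\<in>{0..K}. (-1) ^ (K - (K + 0 - m)) * int ((r - (K + 0 - m)) choose (K - (K + 0 - m))) * (int a * int r ^ (K + 0 - m)))"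
        by (rule sum.atLeastAtMost_rev)
      also have "\<dots> = int a * (\<Sum>m\<le>K. (-1) ^ m * int (((r - K + m) choose m) * r ^ (K - m)))"
        unfolding sum_distrib_left atLeast0AtMost
        by (rule sum.cong) (use Kr in auto)
      finally have be: "beta h (int r) k = int a * (\<Sum>m\<le>K. (-1) ^ m * int (((r - K + m) choose m) * r ^ (K - m)))" .
      define T where "T m = int (((r - K + m) choose m) * r ^ (K - m))" for m
      have m1: "\<forall>i<K. T (Suc i) \<le> T i" unfolding T_def of_nat_le_iff using mono_step[OF Kr] by blast
      have m2: "\<forall>i\<le>K. 0 \<le> T i" by (simp add: T_def)
      have s0: "0 \<le> (\<Sum>i\<le>K. (-1)^i * T i)" using alt_sum[OF m1 m2] by blast
      have be2: "beta h (int r) k = int a * (\<Sum>i\<le>K. (-1)^i * T i)" using be unfolding T_def .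
      show ?thesis using be2 s0 by simp
    qed
  qed
  have notP: "\<not> (\<forall>k. k \<le> d \<longrightarrow> beta h d k \<ge> 0)" if "d > int r" for d
  proof -
    have d2: "d \<ge> 2" using that assms by simp
    have s01: "{0..(1::int)} = {0, 1}" by auto
    have "beta h d 1 = - (d * int a) + int a * int r"
      unfolding beta_eq s01 using d2 by (simp add: h_def)
    also have "\<dots> < 0" using that assms
      by (smt (verit, best) mult_less_cancel_left_pos of_nat_0_less_iff mult.commute)
    finally show ?thesis using d2 by (metis linorder_not_le one_le_numeral order_trans)
  qed
  have "hdepth h = int r"
    unfolding hdepth_def
    by (rule Greatest_equality) (use Pr notP in \<open>auto simp: not_le[symmetric]\<close>)
  then show ?thesis by (simp add: h_def)
qed

end
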